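(* Let $k\ge1$, $t\ge 2$, and let $Cat_{k,t-1}$ be a set of representatives of the $\sim_2$-equivalence classes of $[GL(k,2)]^{t-1}$. Let $\overline{S_t}$ be the set of codes generated by the matrices $(I_k\mid B)$ with $B\in Cat_{k,t-1}$. Then every code in $\overline{S_t}$ is a $t$-CIS $[tk,k]$ code, and every $t$-CIS $[tk,k]$ code is equivalent to some code in $\overline{S_t}$; hence, removing equivalent codes from $\overline{S_t}$ and keeping one representative of each equivalence class yields a set $S_t$ of representatives of all inequivalent $t$-CIS codes of dimension $k$.
   Context: A binary linear $[tk,k]$ code is $t$-CIS if its coordinate set can be partitioned into $t$ pairwise disjoint information sets, an information set being a set of $k$ coordinates whose columns in a generator matrix are linearly independent. Two codes are equivalent if one is obtained from the other by a permutation of coordinates. $[GL(k,2)]^{t-1}$ is the set of $k\times k(t-1)$ binary matrices $(A_1\mid\cdots\mid A_{t-1})$ with all $A_j\in GL(k,2)$. For $A,B\in[GL(k,2)]^{t-1}$, $A\sim_2B$ iff $A=P_kBP_{k(t-1)}$ for some $k\times k$ permutation matrix $P_k$ and some $k(t-1)\times k(t-1)$ permutation matrix $P_{k(t-1)}$. $I_k$ is the identity matrix. *)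

theory Defs
  imports "HOL-Library.Z2" "HOL-Combinatorics.Permutations" "Jordan_Normal_Form.Matrix"
begin

text \<open>Binary matrices are JNF matrices over the field bit = GF(2);
 coordinates / indices start at 0. A binary code of length n is a set of
 bit vectors of dimension n.\<close>

definition row_space :: "bit mat \<Rightarrow> bit vec set" where
  "row_space G = {vec (dim_col G) (\<lambda>j. \<Sum>i<dim_row G. a i * G $$ (i, j)) | a. True}"

definition rows_lin_indep :: "bit mat \<Rightarrow> bool" where
  "rows_lin_indep G \<longleftrightarrow> (\<forall>a :: nat \<Rightarrow> bit.
     (\<forall>j<dim_col G. (\<Sum>i<dim_row G. a i * G $$ (i, j)) = 0) \<longrightarrow> (\<forall>i<dim_row G. a i = 0))"

definition cols_lin_indep :: "bit mat \<Rightarrow> nat set \<Rightarrow> bool" where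
  "cols_lin_indep G I \<longleftrightarrow> (\<forall>a :: nat \<Rightarrow> bit.
     (\<forall>r<dim_row G. (\<Sum>j\<in>I. a j * G $$ (r, j)) = 0) \<longrightarrow> (\<forall>j\<in>I. a j = 0))"

definition generator_matrix :: "nat \<Rightarrow> nat \<Rightarrow> bit mat \<Rightarrow> bit vec set \<Rightarrow> bool" where
  "generator_matrix n k G C \<longleftrightarrow> G \<in> carrier_mat k n \<and> rows_lin_indep G \<and> C = row_space G"

definition linear_code :: "nat \<Rightarrow> nat \<Rightarrow> bit vec set \<Rightarrow> bool" where
  "linear_code n k C \<longleftrightarrow> (\<exists>G. generator_matrix n k G C)"

definition information_set :: "nat \<Rightarrow> nat \<Rightarrow> bit vec set \<Rightarrow> nat set \<Rightarrow> bool" where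
  "information_set n k C I \<longleftrightarrow> I \<subseteq> {..<n} \<and> card I = k \<and>
     (\<exists>G. generator_matrix n k G C \<and> cols_lin_indep G I)"

definition CIS_code :: "nat \<Rightarrow> nat \<Rightarrow> bit vec set \<Rightarrow> bool" where
  "CIS_code t k C \<longleftrightarrow> linear_code (t * k) k C \<and>
     (\<exists>Is :: nat \<Rightarrow> nat set.
        (\<forall>i<t. information_set (t * k) k C (Is i)) \<and>
        (\<forall>i<t. \<forall>j<t. i \<noteq> j \<longrightarrow> Is i \<inter> Is j = {}) \<and>
        (\<Union>i<t. Is i) = {..<t * k})"

definition permute_coords :: "nat \<Rightarrow> (nat \<Rightarrow> nat) \<Rightarrow> bit vec \<Rightarrow> bit vec" where
  "permute_coords n \<sigma> x = vec n (\<lambda>j. x $ \<sigma> j)"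

definition code_equiv :: "nat \<Rightarrow> bit vec set \<Rightarrow> bit vec set \<Rightarrow> bool" where
  "code_equiv n C D \<longleftrightarrow> (\<exists>\<sigma>. \<sigma> permutes {..<n} \<and> C = permute_coords n \<sigma> ` D)"

definition perm_mat :: "nat \<Rightarrow> (nat \<Rightarrow> nat) \<Rightarrow> bit mat" where
  "perm_mat n p = mat n n (\<lambda>(i, j). if p j = i then 1 else 0)"

definition is_perm_mat :: "nat \<Rightarrow> bit mat \<Rightarrow> bool" where
  "is_perm_mat n P \<longleftrightarrow> (\<exists>p. p permutes {..<n} \<and> P = perm_mat n p)"

definition block :: "nat \<Rightarrow> bit mat \<Rightarrow> nat \<Rightarrow> bit mat" where
  "block k A j = mat k k (\<lambda>(r, c). A $$ (r, j * k + c))"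

definition GL_pow :: "nat \<Rightarrow> nat \<Rightarrow> bit mat set" where
  "GL_pow k m = {A. A \<in> carrier_mat k (k * m) \<and> (\<forall>j<m. invertible_mat (block k A j))}"

definition sim2 :: "nat \<Rightarrow> nat \<Rightarrow> bit mat \<Rightarrow> bit mat \<Rightarrow> bool" where
  "sim2 k m A B \<longleftrightarrow> (\<exists>P Q. is_perm_mat k P \<and> is_perm_mat (k * m) Q \<and> A = P * B * Q)"

definition hcat :: "bit mat \<Rightarrow> bit mat \<Rightarrow> bit mat" where
  "hcat A B = mat (dim_row A) (dim_col A + dim_col B)
     (\<lambda>(i, j). if j < dim_col A then A $$ (i, j) else B $$ (i, j - dim_col A))"

end

theory Submission
  imports Defs "Jordan_Normal_Form.Determinant"
begin

declare add_bit_eq_xor[simp del] mult_bit_eq_and[simp del]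

definition cind :: "nat \<Rightarrow> bit mat \<Rightarrow> bool" where
  "cind k M \<longleftrightarrow> (\<forall>a::nat\<Rightarrow>bit. (\<forall>r<k. (\<Sum>c<k. a c * M $$ (r,c)) = 0) \<longrightarrow> (\<forall>c<k. a c = 0))"

lemma mulv_entry: "(M :: bit mat) \<in> carrier_mat k k \<Longrightarrow> v \<in> carrier_vec k \<Longrightarrow> r < k \<Longrightarrow>
   (M *\<^sub>v v) $ r = (\<Sum>c<k. v $ c * M $$ (r,c))"
proof -
  assume a: "M \<in> carrier_mat k k" "v \<in> carrier_vec k" "r < k"
  have "(M *\<^sub>v v) $ r = row M r \<bullet> v" using a by simp
  also have "\<dots> = (\<Sum>c\<in>{0..<k}. M $$ (r,c) * v $ c)" using a unfolding scalar_prod_def by simp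
  also have "\<dots> = (\<Sum>c<k. v $ c * M $$ (r,c))" unfolding lessThan_atLeast0 by (rule sum.cong, rule refl, rule mult.commute)
  finally show ?thesis .
qed

lemma inv_imp_cind: assumes M: "M \<in> carrier_mat k k" and inv: "invertible_mat M"
  shows "cind k M"
  unfolding cind_def
proof (rule allI, rule impI)
  fix a :: "nat \<Rightarrow> bit" assume h: "\<forall>r<k. (\<Sum>c<k. a c * M $$ (r,c)) = 0"
  from inv obtain B where MB: "M * B = 1\<^sub>m k" and BM: "B * M = 1\<^sub>m (dim_row B)"
    using M unfolding invertible_mat_def inverts_mat_def by auto
  have "dim_row B = k" using arg_cong[OF BM, of dim_col] M by simp
  moreover have "dim_col B = k" using arg_cong[OF MB, of dim_col] by simp
  ultimately have B: "B \<in> carrier_mat k k" by auto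
  define v where "v = vec k a"
  have v: "v \<in> carrier_vec k" by (simp add: v_def)
  have Mv: "M *\<^sub>v v = 0\<^sub>v k"
  proof (rule eq_vecI)
    fix r assume r: "r < dim_vec (0\<^sub>v k)"
    then have r': "r < k" by simp
    have "(M *\<^sub>v v) $ r = (\<Sum>c<k. v $ c * M $$ (r,c))" by (rule mulv_entry[OF M v r'])
    also have "\<dots> = (\<Sum>c<k. a c * M $$ (r,c))" by (rule sum.cong, auto simp: v_def)
    also have "\<dots> = 0" using h r' by blast
    finally show "(M *\<^sub>v v) $ r = 0\<^sub>v k $ r" using r' by simp
  qed (insert M, simp)
  have "v = (B * M) *\<^sub>v v" using BM \<open>dim_row B = k\<close> v by simp
  also have "\<dots> = B *\<^sub>v (M *\<^sub>v v)" using B M v by (simp add: assoc_mult_mat_vec)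
  also have "\<dots> = 0\<^sub>v k" unfolding Mv
  proof (rule eq_vecI)
    fix i assume "i < dim_vec (0\<^sub>v k :: bit vec)"
    then have i: "i < k" by simp
    have "(B *\<^sub>v 0\<^sub>v k) $ i = row B i \<bullet> 0\<^sub>v k" using i B by simp
    also have "\<dots> = 0" using B by (intro scalar_prod_right_zero[of _ k]) (metis carrier_matD(2) row_carrier)
    finally show "(B *\<^sub>v 0\<^sub>v k) $ i = 0\<^sub>v k $ i" using i by simp
  qed (insert B, simp)
  finally have "v = 0\<^sub>v k" .
  then show "\<forall>c<k. a c = 0" unfolding v_def by (metis index_vec index_zero_vec(1))
qed

lemma cind_imp_inv: assumes M: "M \<in> carrier_mat k k" and c: "cind k M"
  shows "invertible_mat M"
proof -
  have "det M \<noteq> 0"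
  proof
    assume "det M = 0"
    then obtain v where v: "v \<in> carrier_vec k" "v \<noteq> 0\<^sub>v k" "M *\<^sub>v v = 0\<^sub>v k"
      using det_0_iff_vec_prod_zero_field[OF M] by auto
    have "\<forall>r<k. (\<Sum>c<k. v $ c * M $$ (r,c)) = 0"
      using v mulv_entry[OF M v(1)] by (metis index_zero_vec(1))
    then have "\<forall>c<k. v $ c = 0" using c unfolding cind_def by blast
    then have "v = 0\<^sub>v k" using v(1) by (intro eq_vecI) auto
    with v(2) show False by simp
  qed
  from det_non_zero_imp_unit[OF M this, of "()"]
  obtain B where B: "B \<in> carrier_mat k k" "B * M = 1\<^sub>m k" "M * B = 1\<^sub>m k"
    unfolding Units_def ring_mat_def by auto
  then show ?thesis using M unfolding invertible_mat_def inverts_mat_def square_mat.simps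
    by (metis carrier_matD(1) carrier_matD(2))
qed

lemma mult_entry: "(A :: bit mat) \<in> carrier_mat k l \<Longrightarrow> B \<in> carrier_mat l n \<Longrightarrow> i < k \<Longrightarrow> j < n \<Longrightarrow>
   (A * B) $$ (i,j) = (\<Sum>x<l. A $$ (i,x) * B $$ (x,j))"
  by (simp add: scalar_prod_def lessThan_atLeast0)

lemma perm_lt: "\<sigma> permutes {..<n} \<Longrightarrow> i < n \<Longrightarrow> \<sigma> i < n"
  using permutes_in_image[of \<sigma> "{..<n}" i] by auto

lemma pc_vec: "\<sigma> permutes {..<n} \<Longrightarrow> permute_coords n \<sigma> (vec n g) = vec n (\<lambda>x. g (\<sigma> x))"
  unfolding permute_coords_def by (intro eq_vecI) (auto simp: perm_lt)

lemma pc_comp: "x \<in> carrier_vec n \<Longrightarrow> \<alpha> permutes {..<n} \<Longrightarrow>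
   permute_coords n \<alpha> (permute_coords n \<beta> x) = permute_coords n (\<beta> \<circ> \<alpha>) x"
  unfolding permute_coords_def by (intro eq_vecI) (auto simp: perm_lt)

lemma pc_id: "x \<in> carrier_vec n \<Longrightarrow> permute_coords n id x = x"
  unfolding permute_coords_def by (intro eq_vecI) auto

lemma pc_carrier: "permute_coords n \<sigma> x \<in> carrier_vec n"
  unfolding permute_coords_def by simp

lemma row_space_carrier: "row_space G \<subseteq> carrier_vec (dim_col G)"
  unfolding row_space_def by auto

lemma ce_refl: "D \<subseteq> carrier_vec n \<Longrightarrow> code_equiv n D D"
  unfolding code_equiv_def
  by (rule exI[of _ id]) (auto simp: permutes_id pc_id image_iff subset_iff intro!: bexI)

lemma ce_trans: assumes "code_equiv n C D" "code_equiv n D E" "E \<subseteq> carrier_vec n"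
  shows "code_equiv n C E"
proof -
  obtain \<sigma> \<tau> where s: "\<sigma> permutes {..<n}" "C = permute_coords n \<sigma> ` D"
    and t: "\<tau> permutes {..<n}" "D = permute_coords n \<tau> ` E"
    using assms unfolding code_equiv_def by blast
  have "C = permute_coords n (\<tau> \<circ> \<sigma>) ` E"
    unfolding s(2) t(2) image_comp using assms(3) pc_comp[OF _ s(1)]
    by (intro image_cong) auto
  moreover have "\<tau> \<circ> \<sigma> permutes {..<n}" using s t by (simp add: permutes_compose)
  ultimately show ?thesis unfolding code_equiv_def by blast
qed

lemma ce_sym: assumes "code_equiv n C D" "D \<subseteq> carrier_vec n"
  shows "code_equiv n D C"
proof -
  obtain \<sigma> where s: "\<sigma> permutes {..<n}" "C = permute_coords n \<sigma> ` D"
    using assms unfolding code_equiv_def by blast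
  have i: "inv_into UNIV \<sigma> permutes {..<n}" using s(1) by (rule permutes_inv)
  have "permute_coords n (inv_into UNIV \<sigma>) ` C = D"
    unfolding s(2) image_comp
  proof -
    have "\<And>x. x \<in> D \<Longrightarrow> (permute_coords n (inv_into UNIV \<sigma>) \<circ> permute_coords n \<sigma>) x = x"
      using assms(2) pc_comp[OF _ i, of _ \<sigma>] pc_id permutes_inv_o(1)[OF s(1)] by auto
    then show "(permute_coords n (inv_into UNIV \<sigma>) \<circ> permute_coords n \<sigma>) ` D = D" by simp
  qed
  then show ?thesis unfolding code_equiv_def using i by blast
qed

lemma perm_of_inj: assumes "finite S" "\<forall>x\<in>S. f x \<in> S" "inj_on f S" "\<forall>x. x \<notin> S \<longrightarrow> f x = x"
  shows "f permutes S"
proof (rule bij_imp_permutes)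
  have "f ` S = S" using assms by (intro endo_inj_surj) auto
  then show "bij_betw f S S" using assms(3) by (simp add: bij_betw_def)
qed (use assms in auto)

lemma sum_perm_reindex: "\<pi> permutes {..<k} \<Longrightarrow> (\<Sum>i<k. f (\<pi> i)) = (\<Sum>i<k. (f i :: bit))"
  using sum.reindex_bij_betw[OF permutes_imp_bij, of \<pi> "{..<k}" f] by simp

lemma row_space_perm:
  assumes G: "G \<in> carrier_mat k n" and H: "H \<in> carrier_mat k n"
    and p: "\<pi> permutes {..<k}" and t: "\<tau> permutes {..<n}"
    and e: "\<And>i x. i < k \<Longrightarrow> x < n \<Longrightarrow> H $$ (i,x) = G $$ (\<pi> i, \<tau> x)"
  shows "row_space H = permute_coords n \<tau> ` row_space G"
proof -
  have key: "\<And>b x. x < n \<Longrightarrow> (\<Sum>i<k. b (\<pi> i) * H $$ (i,x)) = (\<Sum>i<k. b i * G $$ (i, \<tau> x))"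
  proof -
    fix b x assume x: "x < n"
    have "(\<Sum>i<k. b (\<pi> i) * H $$ (i,x)) = (\<Sum>i<k. b (\<pi> i) * G $$ (\<pi> i, \<tau> x))"
      using e x by (intro sum.cong) auto
    also have "\<dots> = (\<Sum>i<k. b i * G $$ (i, \<tau> x))"
      by (rule sum_perm_reindex[OF p, of "\<lambda>i. b i * G $$ (i, \<tau> x)"])
    finally show "(\<Sum>i<k. b (\<pi> i) * H $$ (i,x)) = (\<Sum>i<k. b i * G $$ (i, \<tau> x))" .
  qed
  have dims: "dim_row G = k" "dim_col G = n" "dim_row H = k" "dim_col H = n" using G H by auto
  show ?thesis
  proof
    show "row_space H \<subseteq> permute_coords n \<tau> ` row_space G"
    proof
      fix v assume "v \<in> row_space H"
      then obtain a where v: "v = vec n (\<lambda>j. \<Sum>i<k. a i * H $$ (i, j))"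
        unfolding row_space_def dims by auto
      define b where "b = (\<lambda>i. a (inv_into UNIV \<pi> i))"
      have ab: "\<And>i. a i = b (\<pi> i)" unfolding b_def using permutes_inverses(2)[OF p] by simp
      have "v = permute_coords n \<tau> (vec n (\<lambda>j. \<Sum>i<k. b i * G $$ (i, j)))"
        unfolding v pc_vec[OF t] using key[of _ b] ab by (intro eq_vecI) auto
      moreover have "vec n (\<lambda>j. \<Sum>i<k. b i * G $$ (i, j)) \<in> row_space G"
        unfolding row_space_def dims by auto
      ultimately show "v \<in> permute_coords n \<tau> ` row_space G" by blast
    qed
    show "permute_coords n \<tau> ` row_space G \<subseteq> row_space H"
    proof
      fix w assume "w \<in> permute_coords n \<tau> ` row_space G"
      then obtain b where w: "w = permute_coords n \<tau> (vec n (\<lambda>j. \<Sum>i<k. b i * G $$ (i, j)))"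
        unfolding row_space_def dims by auto
      have "w = vec n (\<lambda>j. \<Sum>i<k. b (\<pi> i) * H $$ (i, j))"
        unfolding w pc_vec[OF t] using key[of _ b] by (intro eq_vecI) auto
      then show "w \<in> row_space H" unfolding row_space_def dims by auto
    qed
  qed
qed

lemma row_space_mult_sub:
  assumes M: "(M :: bit mat) \<in> carrier_mat k k" and G: "G \<in> carrier_mat k n"
  shows "row_space (M * G) \<subseteq> row_space G"
proof
  fix v assume "v \<in> row_space (M * G)"
  then obtain a where v: "v = vec n (\<lambda>j. \<Sum>i<k. a i * (M * G) $$ (i, j))"
    unfolding row_space_def using M G by auto
  define b where "b = (\<lambda>l. \<Sum>i<k. a i * M $$ (i, l))"
  have "v = vec n (\<lambda>j. \<Sum>l<k. b l * G $$ (l, j))"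
  proof (rule eq_vecI)
    fix j assume "j < dim_vec (vec n (\<lambda>j. \<Sum>l<k. b l * G $$ (l, j)))"
    then have j: "j < n" by simp
    have "(\<Sum>i<k. a i * (M * G) $$ (i, j)) = (\<Sum>i<k. a i * (\<Sum>l<k. M $$ (i,l) * G $$ (l,j)))"
      using mult_entry[OF M G _ j] by (intro sum.cong) auto
    also have "\<dots> = (\<Sum>i<k. \<Sum>l<k. a i * M $$ (i,l) * G $$ (l,j))"
      by (simp only: sum_distrib_left mult.assoc)
    also have "\<dots> = (\<Sum>l<k. \<Sum>i<k. a i * M $$ (i,l) * G $$ (l,j))"
      by (rule sum.swap)
    also have "\<dots> = (\<Sum>l<k. b l * G $$ (l, j))"
      unfolding b_def by (simp only: sum_distrib_right)
    finally show "v $ j = vec n (\<lambda>j. \<Sum>l<k. b l * G $$ (l, j)) $ j" using j v by simp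
  qed (simp add: v)
  then show "v \<in> row_space G" unfolding row_space_def using G by auto
qed

lemma inv_obtain: assumes M: "(M :: bit mat) \<in> carrier_mat k k" and "invertible_mat M"
  obtains N where "N \<in> carrier_mat k k" "N * M = 1\<^sub>m k" "M * N = 1\<^sub>m k"
proof -
  from assms obtain B where MB: "M * B = 1\<^sub>m k" and BM: "B * M = 1\<^sub>m (dim_row B)"
    using M unfolding invertible_mat_def inverts_mat_def by auto
  have "dim_row B = k" using arg_cong[OF BM, of dim_col] M by simp
  moreover have "dim_col B = k" using arg_cong[OF MB, of dim_col] by simp
  ultimately show ?thesis using that MB BM by auto
qed

lemma row_space_mult:
  assumes M: "(M :: bit mat) \<in> carrier_mat k k" and inv: "invertible_mat M" and G: "G \<in> carrier_mat k n"
  shows "row_space (M * G) = row_space G"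
proof
  show "row_space (M * G) \<subseteq> row_space G" by (rule row_space_mult_sub[OF M G])
  obtain N where N: "N \<in> carrier_mat k k" "N * M = 1\<^sub>m k" using inv_obtain[OF M inv] by blast
  have "G = N * (M * G)" using N M G by (simp add: assoc_mult_mat[symmetric])
  then have "row_space G = row_space (N * (M * G))" by simp
  also have "\<dots> \<subseteq> row_space (M * G)" using N M G by (intro row_space_mult_sub) auto
  finally show "row_space G \<subseteq> row_space (M * G)" .
qed

lemma inv_det: "(M :: bit mat) \<in> carrier_mat k k \<Longrightarrow> invertible_mat M \<Longrightarrow> det M \<noteq> 0"
proof -
  assume M: "M \<in> carrier_mat k k" and i: "invertible_mat M"
  obtain N where N: "N \<in> carrier_mat k k" "N * M = 1\<^sub>m k" using inv_obtain[OF M i] by blast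
  have "det N * det M = 1" using det_mult[OF N(1) M] N(2) by simp
  then show ?thesis by (metis mult_zero_right zero_neq_one)
qed

lemma det_inv: assumes M: "(M :: bit mat) \<in> carrier_mat k k" and d: "det M \<noteq> 0"
  shows "invertible_mat M"
proof -
  from det_non_zero_imp_unit[OF M d, of "()"]
  obtain B where B: "B \<in> carrier_mat k k" "B * M = 1\<^sub>m k" "M * B = 1\<^sub>m k"
    unfolding Units_def ring_mat_def by auto
  then show ?thesis using M unfolding invertible_mat_def inverts_mat_def square_mat.simps
    by (metis carrier_matD(1) carrier_matD(2))
qed

lemma inv_mult: "(A :: bit mat) \<in> carrier_mat k k \<Longrightarrow> B \<in> carrier_mat k k \<Longrightarrow>
  invertible_mat A \<Longrightarrow> invertible_mat B \<Longrightarrow> invertible_mat (A * B)"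
  by (intro det_inv[of _ k]) (auto simp: det_mult inv_det)

lemma inv_one: "invertible_mat (1\<^sub>m k :: bit mat)"
  by (intro det_inv[of _ k]) auto

lemma block_carrier: "block k A j \<in> carrier_mat k k"
  unfolding block_def by simp

lemma block_index: "r < k \<Longrightarrow> c < k \<Longrightarrow> block k A j $$ (r,c) = A $$ (r, j*k+c)"
  unfolding block_def by simp

lemma sum_interval_shift: "(\<Sum>x\<in>{j*k..<j*k+(k::nat)}. f x) = (\<Sum>c<k. f (j*k+c))"
  using sum.shift_bounds_nat_ivl[of f 0 "j*k" k]
  by (simp add: lessThan_atLeast0 add.commute)

lemma block_cols:
  assumes G: "G \<in> carrier_mat k n" and jn: "j*k+k \<le> n"
  shows "cols_lin_indep G {j*k..<j*k+k} \<longleftrightarrow> cind k (block k G j)"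
proof -
  have S: "(\<Sum>x\<in>{j*k..<j*k+k}. a x * G $$ (r,x)) = (\<Sum>c<k. a (j*k+c) * block k G j $$ (r,c))"
    if r: "r < k" for a :: "nat \<Rightarrow> bit" and r
    unfolding sum_interval_shift
  proof (rule sum.cong[OF refl])
    fix c assume "c \<in> {..<k}" then have c: "c < k" by simp
    show "a (j*k+c) * G $$ (r, j*k+c) = a (j*k+c) * block k G j $$ (r,c)"
      by (simp only: block_index[OF r c])
  qed
  have dr: "dim_row G = k" using G by simp
  show ?thesis
  proof
    assume h: "cols_lin_indep G {j*k..<j*k+k}"
    show "cind k (block k G j)" unfolding cind_def
    proof (rule allI, rule impI)
      fix a :: "nat \<Rightarrow> bit" assume a: "\<forall>r<k. (\<Sum>c<k. a c * block k G j $$ (r, c)) = 0"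
      define a' where "a' = (\<lambda>x. a (x - j*k))"
      have "\<forall>r<dim_row G. (\<Sum>x\<in>{j*k..<j*k+k}. a' x * G $$ (r,x)) = 0"
      proof (intro allI impI)
        fix r assume "r < dim_row G" then have r: "r < k" using dr by simp
        have "(\<Sum>x\<in>{j*k..<j*k+k}. a' x * G $$ (r,x)) = (\<Sum>c<k. a' (j*k+c) * block k G j $$ (r,c))"
          by (rule S[OF r])
        also have "\<dots> = (\<Sum>c<k. a c * block k G j $$ (r,c))" by (simp only: a'_def add_diff_cancel_left')
        also have "\<dots> = 0" using a r by blast
        finally show "(\<Sum>x\<in>{j*k..<j*k+k}. a' x * G $$ (r,x)) = 0" .
      qed
      then have "\<forall>x\<in>{j*k..<j*k+k}. a' x = 0" using h unfolding cols_lin_indep_def by blast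
      then show "\<forall>c<k. a c = 0"
      proof (intro allI impI)
        fix c assume z: "\<forall>x\<in>{j*k..<j*k+k}. a' x = 0" and c: "c < k"
        have "j*k+c \<in> {j*k..<j*k+k}" using c by simp
        then have "a' (j*k+c) = 0" using z by blast
        then show "a c = 0" by (simp only: a'_def add_diff_cancel_left')
      qed
    qed
  next
    assume h: "cind k (block k G j)"
    show "cols_lin_indep G {j*k..<j*k+k}" unfolding cols_lin_indep_def
    proof (rule allI, rule impI)
      fix a :: "nat \<Rightarrow> bit" assume a: "\<forall>r<dim_row G. (\<Sum>x\<in>{j*k..<j*k+k}. a x * G $$ (r,x)) = 0"
      have P: "\<forall>r<k. (\<Sum>c<k. a (j*k+c) * block k G j $$ (r, c)) = 0"
      proof (intro allI impI)
        fix r assume r: "r < k"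
        have "(\<Sum>c<k. a (j*k+c) * block k G j $$ (r, c)) = (\<Sum>x\<in>{j*k..<j*k+k}. a x * G $$ (r,x))"
          by (rule S[OF r, symmetric])
        also have "\<dots> = 0" using a dr r by blast
        finally show "(\<Sum>c<k. a (j*k+c) * block k G j $$ (r, c)) = 0" .
      qed
      have I: "\<And>b. (\<forall>r<k. (\<Sum>c<k. b c * block k G j $$ (r, c)) = 0) \<Longrightarrow> \<forall>c<k. b c = 0"
        using h unfolding cind_def by blast
      have "\<forall>c<k. a (j*k+c) = 0" by (rule I[OF P])
      then show "\<forall>x\<in>{j*k..<j*k+k}. a x = 0"
      proof (intro ballI)
        fix x assume z: "\<forall>c<k. a (j*k+c) = 0" and x: "x \<in> {j*k..<j*k+k}"
        then have lt: "x - j*k < k" and eqx: "j*k + (x - j*k) = x" by auto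
        have "a (j*k + (x - j*k)) = 0" using z lt by blast
        then show "a x = 0" by (simp only: eqx)
      qed
    qed
  qed
qed

lemma block_mult:
  assumes M: "(M :: bit mat) \<in> carrier_mat k k" and G: "G \<in> carrier_mat k n" and jn: "j*k+k \<le> n"
  shows "block k (M * G) j = M * block k G j"
proof (rule eq_matI)
  fix r c assume "r < dim_row (M * block k G j)" "c < dim_col (M * block k G j)"
  then have rc: "r < k" "c < k" using M by (auto simp: block_def)
  have "block k (M * G) j $$ (r,c) = (M * G) $$ (r, j*k+c)" using rc by (simp add: block_index)
  also have "\<dots> = (\<Sum>x<k. M $$ (r,x) * G $$ (x, j*k+c))" using rc jn by (intro mult_entry[OF M G]) auto
  also have "\<dots> = (\<Sum>x<k. M $$ (r,x) * block k G j $$ (x, c))" using rc by (intro sum.cong) (auto simp: block_index)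
  also have "\<dots> = (M * block k G j) $$ (r,c)" using rc by (intro mult_entry[OF M block_carrier, symmetric]) auto
  finally show "block k (M * G) j $$ (r,c) = (M * block k G j) $$ (r,c)" .
qed (use M in \<open>auto simp: block_def\<close>)

lemma ifmult: "(if P then 1 else 0) * x = (if P then x else (0::bit))"
  by simp

lemma cols_invariant:
  assumes G: "(G :: bit mat) \<in> carrier_mat k n" and G': "G' \<in> carrier_mat k n"
    and eq: "row_space G = row_space G'" and I: "I \<subseteq> {..<n}"
    and c: "cols_lin_indep G' I"
  shows "cols_lin_indep G I"
  unfolding cols_lin_indep_def
proof (rule allI, rule impI)
  fix a :: "nat \<Rightarrow> bit" assume a: "\<forall>r<dim_row G. (\<Sum>j\<in>I. a j * G $$ (r, j)) = 0"
  have "\<forall>r<dim_row G'. (\<Sum>j\<in>I. a j * G' $$ (r, j)) = 0"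
  proof (intro allI impI)
    fix r assume "r < dim_row G'"
    then have r: "r < k" using G' by simp
    define e where "e = (\<lambda>i. if i = r then 1 else (0::bit))"
    have ee: "\<And>j. (\<Sum>i<k. e i * G' $$ (i, j)) = G' $$ (r,j)"
      unfolding e_def using r by (simp add: ifmult)
    have "vec n (\<lambda>j. \<Sum>i<k. e i * G' $$ (i, j)) \<in> row_space G'"
      unfolding row_space_def using G' by auto
    then have "vec n (\<lambda>j. \<Sum>i<k. e i * G' $$ (i, j)) \<in> row_space G" using eq by simp
    then obtain b where b: "vec n (\<lambda>j. \<Sum>i<k. e i * G' $$ (i, j)) = vec n (\<lambda>j. \<Sum>i<k. b i * G $$ (i, j))"
      unfolding row_space_def using G by auto
    have bj: "\<And>j. j \<in> I \<Longrightarrow> G' $$ (r,j) = (\<Sum>i<k. b i * G $$ (i, j))"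
    proof -
      fix j assume "j \<in> I" then have "j < n" using I by auto
      then show "G' $$ (r,j) = (\<Sum>i<k. b i * G $$ (i, j))"
        using arg_cong[OF b, of "\<lambda>v. v $ j"] ee by simp
    qed
    have "(\<Sum>j\<in>I. a j * G' $$ (r, j)) = (\<Sum>j\<in>I. a j * (\<Sum>i<k. b i * G $$ (i, j)))"
      using bj by (intro sum.cong) auto
    also have "\<dots> = (\<Sum>j\<in>I. \<Sum>i<k. b i * (a j * G $$ (i, j)))"
      by (simp only: sum_distrib_left mult.left_commute)
    also have "\<dots> = (\<Sum>i<k. \<Sum>j\<in>I. b i * (a j * G $$ (i, j)))" by (rule sum.swap)
    also have "\<dots> = (\<Sum>i<k. b i * (\<Sum>j\<in>I. a j * G $$ (i, j)))" by (simp only: sum_distrib_left)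
    also have "\<dots> = 0" using a G by (intro sum.neutral) auto
    finally show "(\<Sum>j\<in>I. a j * G' $$ (r, j)) = 0" .
  qed
  then show "\<forall>j\<in>I. a j = 0" using c unfolding cols_lin_indep_def by blast
qed

lemma iv_div: "0 < (k::nat) \<Longrightarrow> x \<in> {j*k..<j*k+k} \<longleftrightarrow> x div k = j"
proof
  assume k: "0 < k" and "x \<in> {j*k..<j*k+k}"
  then show "x div k = j" by (intro div_nat_eqI) (auto simp: mult.commute)
next
  assume k: "0 < k" and d: "x div k = j"
  have "x = x div k * k + x mod k" by simp
  moreover have "x mod k < k" using k by simp
  ultimately show "x \<in> {j*k..<j*k+k}" using d by (metis atLeastLessThan_iff le_add1 nat_add_left_cancel_less)
qed

lemma hcat_carrier: "A \<in> carrier_mat k a \<Longrightarrow> B \<in> carrier_mat k b \<Longrightarrow> hcat A B \<in> carrier_mat k (a + b)"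
  unfolding hcat_def by auto

lemma hcat_index: "A \<in> carrier_mat k a \<Longrightarrow> i < k \<Longrightarrow> x < a + dim_col B \<Longrightarrow>
  hcat A B $$ (i,x) = (if x < a then A $$ (i,x) else B $$ (i, x - a))"
  unfolding hcat_def by auto

lemma part1:
  assumes k: "k \<ge> 1" and t: "t \<ge> 1" and B: "B \<in> GL_pow k (t - 1)"
  shows "CIS_code t k (row_space (hcat (1\<^sub>m k) B))"
proof -
  define n where "n = t * k"
  define H where "H = hcat (1\<^sub>m k) B"
  have Bc: "B \<in> carrier_mat k (k * (t - 1))" using B unfolding GL_pow_def by auto
  have kn: "k + k * (t - 1) = n" unfolding n_def using t by (cases t) auto
  have H: "H \<in> carrier_mat k n" unfolding H_def kn[symmetric] by (rule hcat_carrier[OF one_carrier_mat Bc])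
  have He: "\<And>i x. i < k \<Longrightarrow> x < n \<Longrightarrow> H $$ (i,x) = (if x < k then 1\<^sub>m k $$ (i,x) else B $$ (i, x - k))"
    unfolding H_def using Bc kn by (intro hcat_index) auto
  have gen: "generator_matrix n k H (row_space H)"
    unfolding generator_matrix_def
  proof (intro conjI)
    show "H \<in> carrier_mat k n" by (rule H)
    show "row_space H = row_space H" ..
    show "rows_lin_indep H" unfolding rows_lin_indep_def
    proof (intro allI impI)
      fix a :: "nat \<Rightarrow> bit" and i
      assume a: "\<forall>j<dim_col H. (\<Sum>i<dim_row H. a i * H $$ (i, j)) = 0" and i: "i < dim_row H"
      have ik: "i < k" "i < n" using i H kn by auto
      have "(\<Sum>l<k. a l * H $$ (l, i)) = (\<Sum>l<k. if l = i then a l else 0)"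
        using ik by (intro sum.cong) (auto simp: He)
      also have "\<dots> = a i" using ik by simp
      finally show "a i = 0" using a ik H by auto
    qed
  qed
  define Is where "Is = (\<lambda>j::nat. {j*k..<j*k+k})"
  have k0: "0 < k" using k by simp
  have blk: "invertible_mat (block k H j)" if j: "j < t" for j
  proof (cases j)
    case 0
    have "block k H j = 1\<^sub>m k"
    proof (rule eq_matI)
      fix r c assume "r < dim_row (1\<^sub>m k :: bit mat)" "c < dim_col (1\<^sub>m k :: bit mat)"
      then have rc: "r < k" "c < k" by auto
      have "c < n" using rc kn by linarith
      then show "block k H j $$ (r,c) = 1\<^sub>m k $$ (r,c)" using rc 0 by (simp add: block_index He)
    qed (auto simp: block_def)
    then show ?thesis by (simp add: inv_one)
  next
    case (Suc j')
    have j': "j' < t - 1" using j Suc by simp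
    have "block k H j = block k B j'"
    proof (rule eq_matI)
      fix r c assume "r < dim_row (block k B j')" "c < dim_col (block k B j')"
      then have rc: "r < k" "c < k" by (auto simp: block_def)
      have "j' * k + c < k * (t - 1)"
      proof -
        have "Suc j' \<le> t - 1" using j' by simp
        then have "Suc j' * k \<le> (t - 1) * k" by (rule mult_le_mono1)
        then show ?thesis using rc by (simp add: mult.commute)
      qed
      then have lt: "k + (j' * k + c) < n" using kn by linarith
      have "block k H j $$ (r,c) = H $$ (r, k + (j' * k + c))"
        using rc Suc by (simp add: block_index add.assoc)
      also have "\<dots> = B $$ (r, j' * k + c)" using rc lt by (simp add: He)
      finally show "block k H j $$ (r,c) = block k B j' $$ (r,c)" using rc by (simp add: block_index)
    qed (auto simp: block_def)
    then show ?thesis using B j' unfolding GL_pow_def by auto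
  qed
  have info: "information_set n k (row_space H) (Is j)" if j: "j < t" for j
    unfolding information_set_def
  proof (intro conjI exI)
    have "j * k + k \<le> n" unfolding n_def using j
      by (metis add.commute mult_Suc mult_le_mono1 Suc_leI)
    then show "Is j \<subseteq> {..<n}" unfolding Is_def by auto
    show "card (Is j) = k" unfolding Is_def by simp
    show "generator_matrix n k H (row_space H)" by (rule gen)
    show "cols_lin_indep H (Is j)" unfolding Is_def
      using block_cols[OF H \<open>j * k + k \<le> n\<close>] inv_imp_cind[OF block_carrier blk[OF j]] by simp
  qed
  show ?thesis
    unfolding CIS_code_def n_def[symmetric] H_def[symmetric]
  proof (intro conjI exI)
    show "linear_code n k (row_space H)" unfolding linear_code_def using gen by blast
    show "\<forall>i<t. information_set n k (row_space H) (Is i)" using info by blast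
    show "\<forall>i<t. \<forall>j<t. i \<noteq> j \<longrightarrow> Is i \<inter> Is j = {}"
      unfolding Is_def disjoint_iff iv_div[OF k0] by blast
    show "(\<Union>i<t. Is i) = {..<n}"
    proof
      show "(\<Union>i<t. Is i) \<subseteq> {..<n}" using info unfolding information_set_def by blast
      show "{..<n} \<subseteq> (\<Union>i<t. Is i)"
      proof
        fix x assume "x \<in> {..<n}"
        then have "x div k < t" unfolding n_def using k0 by (simp add: div_less_iff_less_mult)
        moreover have "x \<in> Is (x div k)" unfolding Is_def using iv_div[OF k0] by blast
        ultimately show "x \<in> (\<Union>i<t. Is i)" by blast
      qed
    qed
  qed
qed

lemma perm_mat_index: "i < n \<Longrightarrow> j < n \<Longrightarrow> perm_mat n p $$ (i,j) = (if p j = i then 1 else 0)"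
  unfolding perm_mat_def by simp

lemma perm_mat_carrier: "perm_mat n p \<in> carrier_mat n n"
  unfolding perm_mat_def by simp

lemma perm_left:
  assumes p: "p permutes {..<k}" and X: "(X :: bit mat) \<in> carrier_mat k m" and i: "i < k" and j: "j < m"
  shows "(perm_mat k p * X) $$ (i,j) = X $$ (inv_into UNIV p i, j)"
proof -
  have "(perm_mat k p * X) $$ (i,j) = (\<Sum>l<k. perm_mat k p $$ (i,l) * X $$ (l,j))"
    by (rule mult_entry[OF perm_mat_carrier X i j])
  also have "\<dots> = (\<Sum>l<k. if l = inv_into UNIV p i then X $$ (l,j) else 0)"
  proof (rule sum.cong[OF refl])
    fix l assume "l \<in> {..<k}"
    then have l: "l < k" by simp
    have pe: "p l = i \<longleftrightarrow> l = inv_into UNIV p i" using permutes_inv_eq[OF p] by metis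
    show "perm_mat k p $$ (i,l) * X $$ (l,j) = (if l = inv_into UNIV p i then X $$ (l,j) else 0)"
      using i l by (simp add: perm_mat_index pe)
  qed
  also have "\<dots> = X $$ (inv_into UNIV p i, j)"
    using perm_lt[OF permutes_inv[OF p] i] by simp
  finally show ?thesis .
qed

lemma perm_right:
  assumes q: "q permutes {..<m}" and X: "(X :: bit mat) \<in> carrier_mat k m" and i: "i < k" and j: "j < m"
  shows "(X * perm_mat m q) $$ (i,j) = X $$ (i, q j)"
proof -
  have "(X * perm_mat m q) $$ (i,j) = (\<Sum>l<m. X $$ (i,l) * perm_mat m q $$ (l,j))"
    by (rule mult_entry[OF X perm_mat_carrier i j])
  also have "\<dots> = (\<Sum>l<m. if l = q j then X $$ (i,l) else 0)"
    using j by (intro sum.cong) (auto simp: perm_mat_index)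
  also have "\<dots> = X $$ (i, q j)"
    using perm_lt[OF q j] by simp
  finally show ?thesis .
qed

lemma sim2_equiv:
  assumes B': "B' \<in> carrier_mat k m" and P: "is_perm_mat k P" and Q: "is_perm_mat m Q"
    and B: "B = P * B' * Q"
  shows "code_equiv (k + m) (row_space (hcat (1\<^sub>m k) B)) (row_space (hcat (1\<^sub>m k) B'))"
proof -
  obtain p where p: "p permutes {..<k}" and Pp: "P = perm_mat k p" using P unfolding is_perm_mat_def by blast
  obtain q where q: "q permutes {..<m}" and Qq: "Q = perm_mat m q" using Q unfolding is_perm_mat_def by blast
  define ip where "ip = inv_into UNIV p"
  have ip: "ip permutes {..<k}" unfolding ip_def by (rule permutes_inv[OF p])
  have PB': "P * B' \<in> carrier_mat k m" unfolding Pp using B' perm_mat_carrier by (metis mult_carrier_mat)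
  have Bc: "B \<in> carrier_mat k m" unfolding B Qq using PB' perm_mat_carrier by (metis mult_carrier_mat)
  have Be: "B $$ (i,j) = B' $$ (ip i, q j)" if "i < k" "j < m" for i j
  proof -
    have "B $$ (i,j) = (P * B') $$ (i, q j)" unfolding B Qq by (rule perm_right[OF q PB' that])
    also have "\<dots> = B' $$ (ip i, q j)" unfolding Pp ip_def using perm_lt[OF q that(2)] that
      by (intro perm_left[OF p B']) auto
    finally show ?thesis .
  qed
  define \<tau> where "\<tau> = (\<lambda>x. if x < k then ip x else if x < k + m then k + q (x - k) else x)"
  have tau: "\<tau> permutes {..<k+m}"
  proof (rule perm_of_inj)
    show "finite {..<k+m}" by simp
    show "\<forall>x\<in>{..<k + m}. \<tau> x \<in> {..<k + m}"
      unfolding \<tau>_def using perm_lt[OF ip] perm_lt[OF q] by fastforce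
    show "\<forall>x. x \<notin> {..<k + m} \<longrightarrow> \<tau> x = x" unfolding \<tau>_def by auto
    show "inj_on \<tau> {..<k + m}"
    proof (rule inj_onI)
      fix x y assume x: "x \<in> {..<k+m}" and y: "y \<in> {..<k+m}" and e: "\<tau> x = \<tau> y"
      have ipi: "inj ip" using ip by (rule permutes_inj)
      have qi: "inj q" using q by (rule permutes_inj)
      show "x = y"
      proof (cases "x < k"; cases "y < k")
        assume "x < k" "y < k" then show ?thesis using e ipi unfolding \<tau>_def by (auto dest: injD)
      next
        assume "x < k" "\<not> y < k" then show ?thesis using e y perm_lt[OF ip, of x] unfolding \<tau>_def by auto
      next
        assume "\<not> x < k" "y < k" then show ?thesis using e x perm_lt[OF ip, of y] unfolding \<tau>_def by auto
      next
        assume "\<not> x < k" "\<not> y < k"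
        then have "q (x - k) = q (y - k)" using e x y unfolding \<tau>_def by auto
        then have "x - k = y - k" using qi by (auto dest: injD)
        then show ?thesis using \<open>\<not> x < k\<close> \<open>\<not> y < k\<close> by simp
      qed
    qed
  qed
  have "row_space (hcat (1\<^sub>m k) B) = permute_coords (k+m) \<tau> ` row_space (hcat (1\<^sub>m k) B')"
  proof (rule row_space_perm[OF _ _ ip tau])
    show "hcat (1\<^sub>m k) B' \<in> carrier_mat k (k + m)" using B' by (intro hcat_carrier) auto
    show "hcat (1\<^sub>m k) B \<in> carrier_mat k (k + m)" using Bc by (intro hcat_carrier) auto
    fix i x assume i: "i < k" and x: "x < k + m"
    have ipk: "ip i < k" using perm_lt[OF ip i] .
    have dB: "dim_col B = m" "dim_col B' = m" using Bc B' by auto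
    show "hcat (1\<^sub>m k) B $$ (i, x) = hcat (1\<^sub>m k) B' $$ (ip i, \<tau> x)"
    proof (cases "x < k")
      case True
      have "ip x < k" using perm_lt[OF ip True] .
      then show ?thesis using True i x ipk dB
        by (simp add: hcat_index[OF one_carrier_mat] \<tau>_def inj_eq[OF permutes_inj[OF ip]])
    next
      case False
      have "q (x - k) < m" using perm_lt[OF q] x False by simp
      then show ?thesis using False i x ipk dB Be[OF i, of "x - k"]
        by (simp add: hcat_index[OF one_carrier_mat] \<tau>_def)
    qed
  qed
  then show ?thesis unfolding code_equiv_def using tau by blast
qed

lemma divmod_block: "c < (k::nat) \<Longrightarrow> (j*k+c) div k = j \<and> (j*k+c) mod k = c"
  by simp

lemma part2:
  assumes k: "k \<ge> 1" and t: "t \<ge> 1" and C: "CIS_code t k C"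
  shows "\<exists>B\<in>GL_pow k (t - 1). code_equiv (t * k) C (row_space (hcat (1\<^sub>m k) B))"
proof -
  define n where "n = t * k"
  define m where "m = k * (t - 1)"
  have kn: "k + m = n" unfolding n_def m_def using t by (cases t) auto
  have k0: "0 < k" using k by simp
  obtain G where gen: "generator_matrix n k G C" using C unfolding CIS_code_def linear_code_def n_def by blast
  have Gc: "G \<in> carrier_mat k n" and CG: "C = row_space G" using gen unfolding generator_matrix_def by auto
  obtain Is where info: "\<forall>i<t. information_set n k C (Is i)"
    and disj: "\<forall>i<t. \<forall>j<t. i \<noteq> j \<longrightarrow> Is i \<inter> Is j = {}"
    and un: "(\<Union>i<t. Is i) = {..<n}"
    using C unfolding CIS_code_def n_def by blast
  have Isn: "Is j \<subseteq> {..<n}" "card (Is j) = k" if "j < t" for j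
    using info that unfolding information_set_def by auto
  have ci: "cols_lin_indep G (Is j)" if j: "j < t" for j
  proof -
    obtain G' where g': "generator_matrix n k G' C" and c': "cols_lin_indep G' (Is j)"
      using info j unfolding information_set_def by blast
    have G'c: "G' \<in> carrier_mat k n" and CG': "C = row_space G'" using g' unfolding generator_matrix_def by auto
    show ?thesis by (rule cols_invariant[OF Gc G'c _ Isn(1)[OF j] c'], simp add: CG[symmetric] CG')
  qed
  have "\<forall>j\<in>{..<t}. \<exists>h. bij_betw h {..<k} (Is j)"
  proof
    fix j assume "j \<in> {..<t}"
    then have j: "j < t" by simp
    have "finite (Is j)" using Isn(1)[OF j] finite_subset by blast
    then obtain h where "bij_betw h {0..<card (Is j)} (Is j)" using ex_bij_betw_nat_finite by blast
    then show "\<exists>h. bij_betw h {..<k} (Is j)" using Isn(2)[OF j] by (auto simp: lessThan_atLeast0)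
  qed
  then have "\<exists>f. \<forall>j\<in>{..<t}. bij_betw (f j) {..<k} (Is j)" by (rule bchoice)
  then obtain f where f0: "\<forall>j\<in>{..<t}. bij_betw (f j) {..<k} (Is j)" by blast
  have f: "bij_betw (f j) {..<k} (Is j)" if "j < t" for j using f0 that by simp
  define \<sigma> where "\<sigma> = (\<lambda>x. if x < n then f (x div k) (x mod k) else x)"
  have dk: "x div k < t" if "x < n" for x using that k0 unfolding n_def by (simp add: div_less_iff_less_mult)
  have mk: "x mod k < k" for x using k0 by simp
  have sIs: "\<sigma> x \<in> Is (x div k)" if "x < n" for x
    using that f[OF dk[OF that]] mk unfolding \<sigma>_def bij_betw_def by auto
  have sig: "\<sigma> permutes {..<n}"
  proof (rule perm_of_inj)
    show "finite {..<n}" by simp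
    show "\<forall>x\<in>{..<n}. \<sigma> x \<in> {..<n}" using sIs Isn(1) dk by blast
    show "\<forall>x. x \<notin> {..<n} \<longrightarrow> \<sigma> x = x" unfolding \<sigma>_def by auto
    show "inj_on \<sigma> {..<n}"
    proof (rule inj_onI)
      fix x y assume x: "x \<in> {..<n}" and y: "y \<in> {..<n}" and e: "\<sigma> x = \<sigma> y"
      have "\<sigma> x \<in> Is (x div k) \<inter> Is (y div k)" using sIs[of x] sIs[of y] x y e by auto
      then have dd: "x div k = y div k" using disj dk x y by blast
      have "f (x div k) (x mod k) = f (x div k) (y mod k)" using e x y dd unfolding \<sigma>_def by simp
      then have "x mod k = y mod k" using f[OF dk] x mk unfolding bij_betw_def inj_on_def by auto
      then show "x = y" using dd by (metis div_mult_mod_eq)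
    qed
  qed
  define isg where "isg = inv_into UNIV \<sigma>"
  have isg: "isg permutes {..<n}" unfolding isg_def by (rule permutes_inv[OF sig])
  define G' where "G' = mat k n (\<lambda>(r,c). G $$ (r, \<sigma> c))"
  have G'c: "G' \<in> carrier_mat k n" unfolding G'_def by simp
  have G'e: "G' $$ (r,c) = G $$ (r, \<sigma> c)" if "r < k" "c < n" for r c
    unfolding G'_def using that by simp
  have rsG: "row_space G = permute_coords n isg ` row_space G'"
  proof (rule row_space_perm[OF G'c Gc permutes_id isg])
    fix i x assume i: "i < k" and x: "x < n"
    have "isg x < n" using perm_lt[OF isg x] .
    then show "G $$ (i, x) = G' $$ (id i, isg x)"
      using i x G'e permutes_inverses(1)[OF sig] unfolding isg_def by simp
  qed
  have jn: "j * k + k \<le> n" if "j < t" for j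
    unfolding n_def using that by (metis add.commute mult_Suc mult_le_mono1 Suc_leI)
  have invb: "invertible_mat (block k G' j)" if j: "j < t" for j
  proof (rule cind_imp_inv[OF block_carrier])
    have bij: "bij_betw (f j) {..<k} (Is j)" by (rule f[OF j])
    have be: "block k G' j $$ (r,c) = G $$ (r, f j c)" if "r < k" "c < k" for r c
    proof -
      have "j * k + c < n" using jn[OF j] that by linarith
      then show ?thesis using that G'e divmod_block[OF that(2), of j] unfolding \<sigma>_def
        by (simp add: block_index)
    qed
    show "cind k (block k G' j)" unfolding cind_def
    proof (rule allI, rule impI)
      fix a :: "nat \<Rightarrow> bit" assume a: "\<forall>r<k. (\<Sum>c<k. a c * block k G' j $$ (r, c)) = 0"
      define a' where "a' = (\<lambda>y. a (inv_into {..<k} (f j) y))"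
      have a'f: "a' (f j c) = a c" if "c < k" for c
        unfolding a'_def using bij that by (simp add: bij_betw_def inv_into_f_f)
      have "\<forall>r<dim_row G. (\<Sum>y\<in>Is j. a' y * G $$ (r, y)) = 0"
      proof (intro allI impI)
        fix r assume "r < dim_row G" then have r: "r < k" using Gc by simp
        have "(\<Sum>y\<in>Is j. a' y * G $$ (r, y)) = (\<Sum>c<k. a' (f j c) * G $$ (r, f j c))"
          by (rule sum.reindex_bij_betw[OF bij, symmetric])
        also have "\<dots> = (\<Sum>c<k. a c * block k G' j $$ (r, c))"
          using a'f be r by (intro sum.cong) auto
        also have "\<dots> = 0" using a r by blast
        finally show "(\<Sum>y\<in>Is j. a' y * G $$ (r, y)) = 0" .
      qed
      then have z: "\<forall>y\<in>Is j. a' y = 0" using ci[OF j] unfolding cols_lin_indep_def by blast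
      show "\<forall>c<k. a c = 0"
      proof (intro allI impI)
        fix c assume c: "c < k"
        have "f j c \<in> Is j" using bij c unfolding bij_betw_def by auto
        then show "a c = 0" using z a'f[OF c] by simp
      qed
    qed
  qed
  have t0: "0 < t" using t by simp
  obtain N where N: "N \<in> carrier_mat k k" "N * block k G' 0 = 1\<^sub>m k"
    using inv_obtain[OF block_carrier invb[OF t0]] by blast
  have Ninv: "invertible_mat N"
  proof (rule det_inv[OF N(1)])
    have "det N * det (block k G' 0) = 1" using det_mult[OF N(1) block_carrier[of k G' 0]] N(2) det_one by metis
    then show "det N \<noteq> 0" by (metis mult_zero_left zero_neq_one)
  qed
  define G'' where "G'' = N * G'"
  have G''c: "G'' \<in> carrier_mat k n" unfolding G''_def using N(1) G'c by simp
  have rs'': "row_space G'' = row_space G'" unfolding G''_def by (rule row_space_mult[OF N(1) Ninv G'c])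
  have bl'': "block k G'' j = N * block k G' j" if "j < t" for j
    unfolding G''_def by (rule block_mult[OF N(1) G'c jn[OF that]])
  have b0: "block k G'' 0 = 1\<^sub>m k" using bl''[OF t0] N(2) by simp
  have binv: "invertible_mat (block k G'' j)" if "j < t" for j
    unfolding bl''[OF that] by (rule inv_mult[OF N(1) block_carrier Ninv invb[OF that]])
  define B where "B = mat k m (\<lambda>(r,c). G'' $$ (r, k + c))"
  have Bc: "B \<in> carrier_mat k m" unfolding B_def by simp
  have BGL: "B \<in> GL_pow k (t - 1)"
    unfolding GL_pow_def
  proof (intro CollectI conjI allI impI)
    show "B \<in> carrier_mat k (k * (t - 1))" using Bc unfolding m_def .
    fix j assume j: "j < t - 1"
    have "block k B j = block k G'' (Suc j)"
    proof (rule eq_matI)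
      fix r c assume "r < dim_row (block k G'' (Suc j))" "c < dim_col (block k G'' (Suc j))"
      then have rc: "r < k" "c < k" by (auto simp: block_def)
      have "j * k + c < m"
      proof -
        have "Suc j \<le> t - 1" using j by simp
        then have "Suc j * k \<le> (t - 1) * k" by (rule mult_le_mono1)
        then show ?thesis using rc unfolding m_def by (simp add: mult.commute)
      qed
      then show "block k B j $$ (r,c) = block k G'' (Suc j) $$ (r,c)"
        using rc unfolding B_def by (simp add: block_index add.assoc)
    qed (auto simp: block_def)
    then show "invertible_mat (block k B j)" using binv j by simp
  qed
  have HG: "hcat (1\<^sub>m k) B = G''"
  proof (rule eq_matI)
    have hc: "hcat (1\<^sub>m k) B \<in> carrier_mat k n" using hcat_carrier[OF one_carrier_mat Bc] kn by simp
    show "dim_row (hcat (1\<^sub>m k) B) = dim_row G''" "dim_col (hcat (1\<^sub>m k) B) = dim_col G''"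
      using hc G''c by auto
    fix r x assume r: "r < dim_row G''" and x: "x < dim_col G''"
    then have r': "r < k" and x': "x < n" using G''c by auto
    have dB: "dim_col B = m" using Bc by simp
    show "hcat (1\<^sub>m k) B $$ (r,x) = G'' $$ (r,x)"
    proof (cases "x < k")
      case True
      have "G'' $$ (r,x) = block k G'' 0 $$ (r,x)" using True r' by (simp add: block_index)
      then show ?thesis using True r' x' kn dB b0 by (simp add: hcat_index[OF one_carrier_mat])
    next
      case False
      then show ?thesis using r' x' kn dB by (simp add: hcat_index[OF one_carrier_mat] B_def)
    qed
  qed
  have "C = permute_coords n isg ` row_space (hcat (1\<^sub>m k) B)"
    unfolding CG rsG HG rs'' ..
  then have "code_equiv n C (row_space (hcat (1\<^sub>m k) B))"
    unfolding code_equiv_def using isg by blast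
  then show ?thesis using BGL unfolding n_def by blast
qed

theorem proposition9:
  fixes k t :: nat and Cat :: "bit mat set"
  assumes "k \<ge> 1" and "t \<ge> 2"
    and Cat_sub: "Cat \<subseteq> GL_pow k (t - 1)"
    and Cat_cover: "\<forall>A\<in>GL_pow k (t - 1). \<exists>B\<in>Cat. sim2 k (t - 1) A B"
    and Cat_distinct: "\<forall>B1\<in>Cat. \<forall>B2\<in>Cat. sim2 k (t - 1) B1 B2 \<longrightarrow> B1 = B2"
  defines "Sbar \<equiv> (\<lambda>B. row_space (hcat (1\<^sub>m k) B)) ` Cat"
  shows "(\<forall>C\<in>Sbar. CIS_code t k C)
       \<and> (\<forall>C. CIS_code t k C \<longrightarrow> (\<exists>D\<in>Sbar. code_equiv (t * k) C D))
       \<and> (\<exists>S\<subseteq>Sbar. (\<forall>C. CIS_code t k C \<longrightarrow> (\<exists>D\<in>S. code_equiv (t * k) C D))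
                  \<and> (\<forall>D1\<in>S. \<forall>D2\<in>S. code_equiv (t * k) D1 D2 \<longrightarrow> D1 = D2))"
proof -
  define n where "n = t * k"
  define m where "m = k * (t - 1)"
  have t1: "t \<ge> 1" using assms(2) by simp
  have kn: "k + m = n" unfolding n_def m_def using t1 by (cases t) auto
  have Bcar: "B \<in> carrier_mat k m" if "B \<in> GL_pow k (t - 1)" for B
    using that unfolding GL_pow_def m_def by auto
  have Scar: "D \<subseteq> carrier_vec n" if hD: "D \<in> Sbar" for D
  proof -
    obtain B where B: "B \<in> Cat" and D: "D = row_space (hcat (1\<^sub>m k) B)" using hD unfolding Sbar_def by blast
    have "dim_col (hcat (1\<^sub>m k) B) = n" using Bcar[of B] B Cat_sub kn unfolding hcat_def by auto
    then show ?thesis unfolding D using row_space_carrier by metis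
  qed
  have P1: "\<forall>C\<in>Sbar. CIS_code t k C"
    unfolding Sbar_def using part1[OF assms(1) t1] Cat_sub by blast
  have P2: "\<exists>D\<in>Sbar. code_equiv n C D" if C: "CIS_code t k C" for C
  proof -
    obtain B where B: "B \<in> GL_pow k (t - 1)" and e1: "code_equiv n C (row_space (hcat (1\<^sub>m k) B))"
      using part2[OF assms(1) t1 C] unfolding n_def by blast
    obtain B' where B': "B' \<in> Cat" and s: "sim2 k (t - 1) B B'" using Cat_cover B by blast
    obtain P Q where P: "is_perm_mat k P" and Q: "is_perm_mat m Q" and BPQ: "B = P * B' * Q"
      using s unfolding sim2_def m_def by blast
    have "code_equiv (k + m) (row_space (hcat (1\<^sub>m k) B)) (row_space (hcat (1\<^sub>m k) B'))"
      by (rule sim2_equiv[OF Bcar P Q BPQ]) (use B' Cat_sub in blast)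
    then have e2: "code_equiv n (row_space (hcat (1\<^sub>m k) B)) (row_space (hcat (1\<^sub>m k) B'))"
      using kn by simp
    have D: "row_space (hcat (1\<^sub>m k) B') \<in> Sbar" unfolding Sbar_def using B' by blast
    show ?thesis using ce_trans[OF e1 e2 Scar[OF D]] D by blast
  qed
  define rep where "rep = (\<lambda>D. SOME D'. D' \<in> Sbar \<and> code_equiv n D' D)"
  have rep: "rep D \<in> Sbar \<and> code_equiv n (rep D) D" if D: "D \<in> Sbar" for D
    unfolding rep_def by (rule someI[of _ D]) (use D ce_refl[OF Scar[OF D]] in blast)
  define S where "S = rep ` Sbar"
  have "S \<subseteq> Sbar" unfolding S_def using rep by blast
  moreover have "\<forall>C. CIS_code t k C \<longrightarrow> (\<exists>D\<in>S. code_equiv n C D)"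
  proof (intro allI impI)
    fix C assume "CIS_code t k C"
    then obtain D where D: "D \<in> Sbar" "code_equiv n C D" using P2 by blast
    have "code_equiv n D (rep D)" using ce_sym rep[OF D(1)] Scar[OF D(1)] by blast
    then have "code_equiv n C (rep D)" using ce_trans[OF D(2)] Scar rep[OF D(1)] by blast
    then show "\<exists>D\<in>S. code_equiv n C D" unfolding S_def using D(1) by blast
  qed
  moreover have "\<forall>D1\<in>S. \<forall>D2\<in>S. code_equiv n D1 D2 \<longrightarrow> D1 = D2"
  proof (intro ballI impI)
    fix D1 D2 assume "D1 \<in> S" "D2 \<in> S" and e: "code_equiv n D1 D2"
    then obtain X Y where X: "X \<in> Sbar" "D1 = rep X" and Y: "Y \<in> Sbar" "D2 = rep Y"
      unfolding S_def by blast
    have xr: "code_equiv n X (rep X)" using ce_sym rep[OF X(1)] Scar[OF X(1)] by blast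
    have ry: "code_equiv n (rep X) Y" using ce_trans[OF e[unfolded X(2) Y(2)]] rep[OF Y(1)] Scar[OF Y(1)] by blast
    have xy: "code_equiv n X Y" using ce_trans[OF xr ry Scar[OF Y(1)]] .
    have yx: "code_equiv n Y X" using ce_sym[OF xy Scar[OF Y(1)]] .
    have "(\<lambda>D'. D' \<in> Sbar \<and> code_equiv n D' X) = (\<lambda>D'. D' \<in> Sbar \<and> code_equiv n D' Y)"
    proof
      fix D' show "(D' \<in> Sbar \<and> code_equiv n D' X) = (D' \<in> Sbar \<and> code_equiv n D' Y)"
        using ce_trans[OF _ xy Scar[OF Y(1)]] ce_trans[OF _ yx Scar[OF X(1)]] by blast
    qed
    then show "D1 = D2" unfolding X(2) Y(2) rep_def by simp
  qed
  ultimately show ?thesis using P1 P2 unfolding n_def by blast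
qed

end
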